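(* Let $q$ be an odd prime power, $n\ge 2$, and if $n=2$ assume $q\equiv 1\pmod 4$. Let $M=(m_{ij})$ be an $n\times n$ matrix with entries in $\mathbb{F}_q$ such that $m_{ij}+m_{ji}=0$ for all $i\neq j$, $m_{11}\neq m_{22}$, and $m_{ii}=m_{22}$ for all $i>2$. Then $\sharp(\mathrm{Num}_0(M)_q)=(q+1)/2$ and $\mathrm{Num}_0(M)_q\setminus\{0\}$ is the set of all $a\in\mathbb{F}_q^*$ such that $-a/(m_{22}-m_{11})$ is a square in $\mathbb{F}_q$. Moreover $0\in\mathrm{Num}'_0(M)_q$ if and only if either $n\ge 4$, or $n=3$ and $q\equiv 1\pmod 4$.
   Context: The Hermitian form is $\langle u,v\rangle=\sum_i u_i^qv_i$; for $u=(x_1,\dots,x_n)\in\mathbb{F}_q^n$ and $M=(m_{ij})$ over $\mathbb{F}_q$, $\langle u,u\rangle=\sum x_i^2$ and $\langle u,Mu\rangle=\sum_{i,j}m_{ij}x_ix_j$. $\mathrm{Num}_0(M)_q=\{\langle u,Mu\rangle: u\in\mathbb{F}_q^n,\ \langle u,u\rangle=0\}$ and $\mathrm{Num}'_0(M)_q=\{\langle u,Mu\rangle: u\in\mathbb{F}_q^n\setminus\{0\},\ \langle u,u\rangle=0\}$. *)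

theory Defs
  imports Main "HOL-Library.Cardinality"
begin

text \<open>F_q is a finite field type 'a (q = CARD('a)). Vectors of F_q^n are functions
  nat => 'a vanishing outside {0..<n} (index i of the paper is i-1 here);
  n x n matrices are functions nat => nat => 'a, only entries with indices < n matter.\<close>

definition vecs :: "nat \<Rightarrow> (nat \<Rightarrow> 'a::zero) set" where
  "vecs n = {u. \<forall>i\<ge>n. u i = 0}"

definition herm :: "nat \<Rightarrow> (nat \<Rightarrow> 'a::{field,finite}) \<Rightarrow> (nat \<Rightarrow> 'a) \<Rightarrow> 'a" where
  "herm n u v = (\<Sum>i<n. u i ^ CARD('a) * v i)"

definition mat_vec :: "nat \<Rightarrow> (nat \<Rightarrow> nat \<Rightarrow> 'a::{field,finite}) \<Rightarrow> (nat \<Rightarrow> 'a) \<Rightarrow> (nat \<Rightarrow> 'a)" where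
  "mat_vec n M u = (\<lambda>i. if i < n then (\<Sum>j<n. M i j * u j) else 0)"

definition Num0 :: "nat \<Rightarrow> (nat \<Rightarrow> nat \<Rightarrow> 'a::{field,finite}) \<Rightarrow> 'a set" where
  "Num0 n M = {herm n u (mat_vec n M u) | u. u \<in> vecs n \<and> herm n u u = 0}"

definition Num0' :: "nat \<Rightarrow> (nat \<Rightarrow> nat \<Rightarrow> 'a::{field,finite}) \<Rightarrow> 'a set" where
  "Num0' n M = {herm n u (mat_vec n M u) | u. u \<in> vecs n \<and> u \<noteq> (\<lambda>_. 0) \<and> herm n u u = 0}"

end

theory Submission
  imports Defs
begin


lemma inv_even:
  assumes "finite B" "\<And>x. x \<in> B \<Longrightarrow> f x \<in> B \<and> f (f x) = x \<and> f x \<noteq> x"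
  shows "even (card B)"
  using assms
proof (induction "card B" arbitrary: B rule: less_induct)
  case less
  show ?case
  proof (cases "B = {}")
    case True then show ?thesis by simp
  next
    case False
    then obtain a where a: "a \<in> B" by blast
    let ?B = "B - {a, f a}"
    have fa: "f a \<in> B" "f a \<noteq> a" "f (f a) = a" using less.prems(2) a by auto
    have cB: "card ?B = card B - 2" using fa a less.prems(1)
      by (simp add: card_Diff_subset)
    have c2: "card B \<ge> 2"
    proof -
      have "{a, f a} \<subseteq> B" using a fa by auto
      then have "card {a, f a} \<le> card B" using less.prems(1) by (rule card_mono[rotated])
      then show ?thesis using fa by simp
    qed
    have "even (card ?B)"
      apply (rule less.hyps)
      using cB c2 apply simp
      using less.prems(1) apply simp
    proof -
      fix x assume x: "x \<in> ?B"
      have p: "f x \<in> B" "f (f x) = x" "f x \<noteq> x" using less.prems(2) x by auto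
      have "f x \<noteq> a" using p fa x by auto
      moreover have "f x \<noteq> f a" using p fa x by (metis DiffD2 insertI1)
      ultimately show "f x \<in> ?B \<and> f (f x) = x \<and> f x \<noteq> x" using p by auto
    qed
    then show ?thesis using cB c2 by (metis add_diff_inverse_nat even_add even_numeral not_less)
  qed
qed


lemma frob:
  fixes x :: "'a::{field,finite}"
  shows "x ^ CARD('a) = x"
proof (cases "x = 0")
  case True then show ?thesis by (simp add: zero_power)
next
  case False
  let ?U = "UNIV - {0::'a}"
  have bij: "bij_betw ((*) x) ?U ?U"
    unfolding bij_betw_def inj_on_def using False
    apply (auto simp: image_def)
    apply (rule_tac x="inverse x * xa" in bexI)
    by (auto simp: field_simps)
  have "(\<Prod>y\<in>?U. x * y) = (\<Prod>y\<in>?U. y)"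
    using prod.reindex_bij_betw[OF bij, of "\<lambda>y. y"] by simp
  moreover have "(\<Prod>y\<in>?U. x * y) = x ^ card ?U * (\<Prod>y\<in>?U. y)"
    by (simp add: prod.distrib)
  moreover have "(\<Prod>y\<in>?U. y) \<noteq> 0" by simp
  ultimately have x1: "x ^ card ?U = 1" by simp
  have cU: "card ?U = CARD('a) - 1" by (simp add: card_Diff_subset)
  have pos: "CARD('a) > 0" by simp
  have "x ^ CARD('a) = x ^ Suc (CARD('a) - 1)" using pos by simp
  also have "\<dots> = x * x ^ card ?U" by (simp only: cU power_Suc)
  also have "\<dots> = x" by (simp only: x1 mult_1_right)
  finally show ?thesis .
qed

lemma two_ne_zero_field:
  assumes "odd CARD('a::{field,finite})"
  shows "(2::'a) \<noteq> 0"
proof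
  assume h: "(2::'a) = 0"
  have "even (card (UNIV::'a set))"
    apply (rule inv_even[where f = "\<lambda>x. x + 1"])
     apply simp
  proof -
    fix x :: 'a
    have h1: "(1::'a) + 1 = 0" using h by (simp only: one_add_one)
    have "x + 1 + 1 = x" by (simp only: add.assoc h1 add_0_right)
    then show "x + 1 \<in> UNIV \<and> x + 1 + 1 = x \<and> x + 1 \<noteq> x" by simp
  qed
  then show False using assms by simp
qed



lemma sq_eq_iff:
  fixes x y :: "'a::field"
  shows "x^2 = y^2 \<longleftrightarrow> x = y \<or> x = - y"
  by (metis power2_eq_iff)

lemma card_squares:
  assumes "odd CARD('a::{field,finite})"
  shows "2 * card (range (\<lambda>x::'a. x^2)) = CARD('a) + 1"
proof -
  let ?S = "range (\<lambda>x::'a. x^2)"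
  have two: "(2::'a) \<noteq> 0" by (rule two_ne_zero_field[OF assms])
  have U: "(UNIV::'a set) = (\<Union>s\<in>?S. {x. x^2 = s})" by auto
  have "card (UNIV::'a set) = (\<Sum>s\<in>?S. card {x::'a. x^2 = s})"
    by (subst U, rule card_UN_disjoint) auto
  also have "\<dots> = (\<Sum>s\<in>?S. if s = 0 then 1 else 2)"
  proof (rule sum.cong[OF refl])
    fix s assume "s \<in> ?S"
    then obtain y where y: "s = y^2" by auto
    have fib: "{x::'a. x^2 = s} = {y, -y}" using y sq_eq_iff by auto
    show "card {x::'a. x^2 = s} = (if s = 0 then 1 else 2)"
    proof (cases "y = 0")
      case True then show ?thesis using fib y by simp
    next
      case False
      have "y \<noteq> - y"
      proof
        assume "y = - y" then have "y + y = 0" by (metis add.right_inverse)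
        then have "2 * y = 0" by (simp only: mult_2)
        then show False using two False by simp
      qed
      then show ?thesis using fib y False by simp
    qed
  qed
  also have "\<dots> = 1 + (\<Sum>s\<in>?S - {0}. 2)"
    by (simp add: sum.remove[of _ 0] image_eqI[of 0 _ 0])
  also have "\<dots> = 1 + 2 * (card ?S - 1)"
    by (simp add: card_Diff_subset image_eqI[of 0 _ 0])
  finally have "CARD('a) = 1 + 2 * (card ?S - 1)" .
  moreover have "card ?S \<ge> 1"
    using card_gt_0_iff[of ?S] by simp
  ultimately show ?thesis by linarith
qed


lemma sum_two_squares:
  assumes "odd CARD('a::{field,finite})"
  shows "\<exists>x y::'a. x^2 + y^2 = a"
proof -
  let ?S = "range (\<lambda>x::'a. x^2)"
  let ?T = "range (\<lambda>y::'a. a - y^2)"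
  have "?T = (\<lambda>s. a - s) ` ?S" by auto
  moreover have "inj (\<lambda>s::'a. a - s)" by (auto simp: inj_def)
  ultimately have cT: "card ?T = card ?S" by (metis card_image inj_on_subset subset_UNIV)
  have "card ?S + card ?T = card (?S \<union> ?T) + card (?S \<inter> ?T)"
    by (rule card_Un_Int) auto
  moreover have "card (?S \<union> ?T) \<le> CARD('a)" by (rule card_mono) auto
  ultimately have "card (?S \<inter> ?T) > 0" using card_squares[OF assms] cT by linarith
  then obtain z where "z \<in> ?S" "z \<in> ?T" by (metis card_gt_0_iff all_not_in_conv IntE)
  then obtain x y where "z = x^2" "z = a - y^2" by blast
  then have "x^2 = a - y^2" by simp
  then have "x^2 + y^2 = a" by (simp add: eq_diff_eq)
  then show ?thesis by blast
qed



lemma arith_aux: "even (b::nat) \<Longrightarrow> q = 4*m+1 \<Longrightarrow> b = a - 2 \<Longrightarrow> 2*a = q+1 \<Longrightarrow> a \<ge> 2 \<Longrightarrow> False"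
  by presburger

lemma minus_one_square:
  assumes q: "odd CARD('a::{field,finite})"
  shows "(\<exists>r::'a. r^2 = -1) \<longleftrightarrow> CARD('a) mod 4 = 1"
proof
  assume "\<exists>r::'a. r^2 = -1"
  then obtain r :: 'a where r: "r^2 = -1" by blast
  have two: "(2::'a) \<noteq> 0" by (rule two_ne_zero_field[OF q])
  obtain k where k: "CARD('a) = 2*k+1" using q oddE by blast
  have "r \<noteq> 0" using r by auto
  have "r ^ CARD('a) = r" by (rule frob)
  then have "r * r^(2*k) = r * 1" using k by simp
  then have "r^(2*k) = 1" using \<open>r \<noteq> 0\<close> by simp
  then have "(-1::'a)^k = 1" using r by (simp add: power_mult)
  moreover have "odd k \<Longrightarrow> (-1::'a)^k = -1" by simp
  moreover have "(-1::'a) \<noteq> 1"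
  proof
    assume h: "(-1::'a) = 1"
    have "(2::'a) = 1 + 1" by simp
    also have "\<dots> = 1 + -1" by (subst h) (rule refl)
    also have "\<dots> = 0" by simp
    finally show False using two by simp
  qed
  ultimately have "even k" by auto
  then show "CARD('a) mod 4 = 1" using k by (auto elim!: evenE)
next
  assume m4: "CARD('a) mod 4 = 1"
  show "\<exists>r::'a. r^2 = -1"
  proof (rule ccontr)
    assume nr: "\<not> (\<exists>r::'a. r^2 = -1)"
    let ?S = "range (\<lambda>x::'a. x^2)"
    let ?B = "?S - {0, 1}"
    have cS: "2 * card ?S = CARD('a) + 1" by (rule card_squares[OF q])
    have "0 \<in> ?S" "1 \<in> ?S" by (auto intro: image_eqI[of 0 _ 0] image_eqI[of 1 _ 1])
    then have cB: "card ?B = card ?S - 2" by (simp add: card_Diff_subset)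
    have "even (card ?B)"
    proof (rule inv_even[where f = inverse])
      show "finite ?B" by simp
      fix s assume s: "s \<in> ?B"
      then obtain x where x: "s = x^2" by auto
      have "inverse s = (inverse x)^2" using x by (simp add: power_inverse)
      moreover have "inverse s \<noteq> 0" "inverse s \<noteq> 1" using s by auto
      ultimately have "inverse s \<in> ?B" by auto
      moreover have "inverse s \<noteq> s"
      proof
        assume "inverse s = s"
        moreover have "s \<noteq> 0" using s by auto
        then have "s * inverse s = 1" by simp
        ultimately have "s * s = 1" by simp
        then have "s = 1 \<or> s = -1" using power2_eq_1_iff[of s] by (simp add: power2_eq_square)
        then show False using s nr x by auto
      qed
      ultimately show "inverse s \<in> ?B \<and> inverse (inverse s) = s \<and> inverse s \<noteq> s" by simp
    qed
    moreover obtain m where "CARD('a) = 4*m+1" using div_mult_mod_eq[of "CARD('a)" 4] m4 by (intro that[of "CARD('a) div 4"]) simp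
    moreover have "card ?S \<ge> 2"
    proof -
      have "card {0::'a, 1} \<le> card ?S" using \<open>0 \<in> ?S\<close> \<open>1 \<in> ?S\<close> by (intro card_mono) auto
      then show ?thesis by simp
    qed
    ultimately show False using cB cS arith_aux by blast
  qed
qed




lemma herm_self:
  fixes u :: "nat \<Rightarrow> 'a::{field,finite}"
  shows "herm n u u = (\<Sum>i<n. (u i)^2)"
  unfolding herm_def by (simp add: frob power2_eq_square)

lemma herm_M:
  fixes M :: "nat \<Rightarrow> nat \<Rightarrow> 'a::{field,finite}" and u :: "nat \<Rightarrow> 'a"
  assumes two: "(2::'a) \<noteq> 0" and n2: "n \<ge> 2"
    and skew: "\<And>i j. i < n \<Longrightarrow> j < n \<Longrightarrow> i \<noteq> j \<Longrightarrow> M i j + M j i = 0"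
    and diag_rest: "\<And>i. 2 \<le> i \<Longrightarrow> i < n \<Longrightarrow> M i i = M 1 1"
  shows "herm n u (mat_vec n M u) = (M 0 0 - M 1 1) * (u 0)^2 + M 1 1 * (\<Sum>i<n. (u i)^2)"
proof -
  define T where "T = (\<Sum>i<n. \<Sum>j<n. M i j * u i * u j)"
  have h: "herm n u (mat_vec n M u) = T"
    unfolding herm_def mat_vec_def T_def
    by (simp add: frob sum_distrib_left mult_ac)
  have T2: "T = (\<Sum>i<n. \<Sum>j<n. M j i * u i * u j)"
    unfolding T_def by (subst sum.swap) (simp add: mult_ac)
  have "2 * T = T + T" by (rule mult_2)
  also have "\<dots> = (\<Sum>i<n. \<Sum>j<n. M i j * u i * u j) + (\<Sum>i<n. \<Sum>j<n. M j i * u i * u j)"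
    using T2 T_def by metis
  also have "\<dots> = (\<Sum>i<n. \<Sum>j<n. (M i j + M j i) * u i * u j)"
    by (simp add: sum.distrib[symmetric] distrib_right)
  also have "\<dots> = (\<Sum>i<n. 2 * (M i i * (u i)^2))"
  proof (rule sum.cong[OF refl])
    fix i assume i: "i \<in> {..<n}"
    have "(\<Sum>j<n. (M i j + M j i) * u i * u j) = (\<Sum>j<n. if j = i then 2 * (M i i * (u i)^2) else 0)"
    proof (rule sum.cong[OF refl])
      fix j assume j: "j \<in> {..<n}"
      show "(M i j + M j i) * u i * u j = (if j = i then 2 * (M i i * (u i)^2) else 0)"
      proof (cases "j = i")
        case True then show ?thesis by (simp add: power2_eq_square mult_2 algebra_simps)
      next
        case False
        then have "M i j + M j i = 0" using skew i j by simp
        then show ?thesis using False by simp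
      qed
    qed
    also have "\<dots> = 2 * (M i i * (u i)^2)" using i by simp
    finally show "(\<Sum>j<n. (M i j + M j i) * u i * u j) = 2 * (M i i * (u i)^2)" .
  qed
  also have "\<dots> = 2 * (\<Sum>i<n. M i i * (u i)^2)" by (simp add: sum_distrib_left)
  finally have T: "T = (\<Sum>i<n. M i i * (u i)^2)" using two by simp
  have split: "\<And>f::nat \<Rightarrow> 'a. (\<Sum>i<n. f i) = f 0 + (\<Sum>i\<in>{Suc 0..<n}. f i)"
    using n2 by (simp add: lessThan_atLeast0 sum.atLeast_Suc_lessThan)
  have R: "(\<Sum>i\<in>{Suc 0..<n}. M i i * (u i)^2) = M 1 1 * (\<Sum>i\<in>{Suc 0..<n}. (u i)^2)"
    unfolding sum_distrib_left
  proof (rule sum.cong[OF refl])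
    fix i assume i: "i \<in> {Suc 0..<n}"
    show "M i i * (u i)^2 = M 1 1 * (u i)^2"
    proof (cases "i = 1")
      case True then show ?thesis by simp
    next
      case False then have "2 \<le> i" "i < n" using i by auto
      then show ?thesis using diag_rest by simp
    qed
  qed
  have "herm n u (mat_vec n M u) = M 0 0 * (u 0)^2 + M 1 1 * (\<Sum>i\<in>{Suc 0..<n}. (u i)^2)"
    using h T split[of "\<lambda>i. M i i * (u i)^2"] R by simp
  also have "\<dots> = (M 0 0 - M 1 1) * (u 0)^2 + M 1 1 * ((u 0)^2 + (\<Sum>i\<in>{Suc 0..<n}. (u i)^2))"
    by (simp add: algebra_simps)
  also have "\<dots> = (M 0 0 - M 1 1) * (u 0)^2 + M 1 1 * (\<Sum>i<n. (u i)^2)"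
    using split[of "\<lambda>i. (u i)^2"] by simp
  finally show ?thesis .
qed



lemma sum_trunc:
  fixes f :: "nat \<Rightarrow> 'a::comm_monoid_add"
  assumes "k \<le> n" "\<And>i. k \<le> i \<Longrightarrow> f i = 0"
  shows "(\<Sum>i<n. f i) = (\<Sum>i<k. f i)"
  by (rule sum.mono_neutral_right) (use assms in auto)

theorem proposition9:
  fixes M :: "nat \<Rightarrow> nat \<Rightarrow> 'a::{field,finite}" and n :: nat
  assumes q_odd: "odd CARD('a)"
    and n2: "n \<ge> 2"
    and n2_q: "n = 2 \<Longrightarrow> CARD('a) mod 4 = 1"
    and skew: "\<And>i j. i < n \<Longrightarrow> j < n \<Longrightarrow> i \<noteq> j \<Longrightarrow> M i j + M j i = 0"
    and diag12: "M 0 0 \<noteq> M 1 1"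
    and diag_rest: "\<And>i. 2 \<le> i \<Longrightarrow> i < n \<Longrightarrow> M i i = M 1 1"
  shows "card (Num0 n M) = (CARD('a) + 1) div 2
    \<and> Num0 n M - {0} = {a. a \<noteq> 0 \<and> (\<exists>y. - a / (M 1 1 - M 0 0) = y ^ 2)}
    \<and> (0 \<in> Num0' n M \<longleftrightarrow> (n \<ge> 4 \<or> (n = 3 \<and> CARD('a) mod 4 = 1)))"
proof -
  define c where "c = M 0 0 - M 1 1"
  have c0: "c \<noteq> 0" using diag12 by (simp add: c_def)
  have two: "(2::'a) \<noteq> 0" by (rule two_ne_zero_field[OF q_odd])
  define Q where "Q = (\<lambda>u::nat \<Rightarrow> 'a. \<Sum>i<n. (u i)^2)"
  have HM: "\<And>u. herm n u (mat_vec n M u) = c * (u 0)^2 + M 1 1 * Q u"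
    unfolding c_def Q_def by (rule herm_M[where n=n and M=M, OF two n2 skew diag_rest])
  have HS: "\<And>u. herm n u u = Q u" unfolding Q_def by (rule herm_self)
  have wit: "\<exists>u\<in>vecs n. u 0 = t \<and> Q u = 0" for t :: 'a
  proof (cases "n = 2")
    case True
    then obtain r :: 'a where r: "r^2 = -1" using minus_one_square[OF q_odd] n2_q by blast
    define u where "u = (\<lambda>i::nat. if i = 0 then t else if i = 1 then r * t else 0)"
    have "Q u = t^2 + r^2 * t^2" unfolding Q_def u_def using True
      by (simp add: eval_nat_numeral power_mult_distrib)
    also have "\<dots> = 0" using r by simp
    finally have "Q u = 0" .
    moreover have "u \<in> vecs n" using True by (auto simp: vecs_def u_def)
    moreover have "u 0 = t" by (simp add: u_def)
    ultimately show ?thesis by blast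
  next
    case False
    then have n3: "n \<ge> 3" using n2 by simp
    obtain a b :: 'a where ab: "a^2 + b^2 = - (t^2)" using sum_two_squares[OF q_odd] by blast
    define u where "u = (\<lambda>i::nat. if i = 0 then t else if i = 1 then a else if i = 2 then b else 0)"
    have "Q u = (\<Sum>i<3. (u i)^2)" unfolding Q_def
      by (rule sum_trunc) (use n3 in \<open>auto simp: u_def\<close>)
    also have "\<dots> = t^2 + (a^2 + b^2)" by (simp add: eval_nat_numeral u_def)
    also have "\<dots> = 0" using ab by simp
    finally have "Q u = 0" .
    moreover have "u \<in> vecs n" using n3 by (auto simp: vecs_def u_def)
    moreover have "u 0 = t" by (simp add: u_def)
    ultimately show ?thesis by blast
  qed
  have N: "Num0 n M = range (\<lambda>t. c * t^2)"
  proof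
    show "Num0 n M \<subseteq> range (\<lambda>t. c * t^2)"
      unfolding Num0_def using HM HS by auto
    show "range (\<lambda>t. c * t^2) \<subseteq> Num0 n M"
    proof
      fix x assume "x \<in> range (\<lambda>t. c * t^2)"
      then obtain t where t: "x = c * t^2" by auto
      obtain u where u: "u \<in> vecs n" "u 0 = t" "Q u = 0" using wit by blast
      have "x = herm n u (mat_vec n M u)" using HM u t by simp
      moreover have "herm n u u = 0" using HS u by simp
      ultimately show "x \<in> Num0 n M" unfolding Num0_def using u by blast
    qed
  qed
  have part1: "card (Num0 n M) = (CARD('a) + 1) div 2"
  proof -
    have "range (\<lambda>t. c * t^2) = (\<lambda>s. c * s) ` range (\<lambda>t::'a. t^2)" by auto
    moreover have "inj (\<lambda>s::'a. c * s)" using c0 by (auto simp: inj_def)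
    ultimately have "card (range (\<lambda>t. c * t^2)) = card (range (\<lambda>t::'a. t^2))"
      by (metis card_image inj_on_subset subset_UNIV)
    then show ?thesis using N card_squares[OF q_odd] by simp
  qed
  have d: "M 1 1 - M 0 0 = - c" by (simp add: c_def)
  have part2: "Num0 n M - {0} = {a. a \<noteq> 0 \<and> (\<exists>y. - a / (M 1 1 - M 0 0) = y ^ 2)}"
  proof
    show "Num0 n M - {0} \<subseteq> {a. a \<noteq> 0 \<and> (\<exists>y. - a / (M 1 1 - M 0 0) = y ^ 2)}"
    proof
      fix x assume x: "x \<in> Num0 n M - {0}"
      then obtain t where t: "x = c * t^2" using N by auto
      have "- x / (M 1 1 - M 0 0) = t^2" using t c0 d by simp
      then show "x \<in> {a. a \<noteq> 0 \<and> (\<exists>y. - a / (M 1 1 - M 0 0) = y ^ 2)}" using x by auto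
    qed
    show "{a. a \<noteq> 0 \<and> (\<exists>y. - a / (M 1 1 - M 0 0) = y ^ 2)} \<subseteq> Num0 n M - {0}"
    proof
      fix x assume "x \<in> {a. a \<noteq> 0 \<and> (\<exists>y. - a / (M 1 1 - M 0 0) = y ^ 2)}"
      then obtain y where x0: "x \<noteq> 0" and y: "- x / (M 1 1 - M 0 0) = y ^ 2" by auto
      have "x / c = y^2" using y d by simp
      then have "x = c * y^2" using c0 by (simp add: field_simps)
      then show "x \<in> Num0 n M - {0}" using N x0 by auto
    qed
  qed
  have N': "0 \<in> Num0' n M \<longleftrightarrow> (\<exists>u\<in>vecs n. u \<noteq> (\<lambda>_. 0) \<and> Q u = 0 \<and> u 0 = 0)"
  proof
    assume "0 \<in> Num0' n M"
    then obtain u where u: "u \<in> vecs n" "u \<noteq> (\<lambda>_. 0)" "Q u = 0" "c * (u 0)^2 + M 1 1 * Q u = 0"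
      unfolding Num0'_def using HM HS by auto
    then have "u 0 = 0" using c0 by simp
    then show "\<exists>u\<in>vecs n. u \<noteq> (\<lambda>_. 0) \<and> Q u = 0 \<and> u 0 = 0" using u by blast
  next
    assume "\<exists>u\<in>vecs n. u \<noteq> (\<lambda>_. 0) \<and> Q u = 0 \<and> u 0 = 0"
    then obtain u where u: "u \<in> vecs n" "u \<noteq> (\<lambda>_. 0)" "Q u = 0" "u 0 = 0" by blast
    have "herm n u (mat_vec n M u) = 0" using HM u by simp
    moreover have "herm n u u = 0" using HS u by simp
    ultimately show "0 \<in> Num0' n M" unfolding Num0'_def using u by force
  qed
  have part3: "0 \<in> Num0' n M \<longleftrightarrow> (n \<ge> 4 \<or> (n = 3 \<and> CARD('a) mod 4 = 1))"
  proof
    assume "0 \<in> Num0' n M"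
    then obtain u where u: "u \<in> vecs n" "u \<noteq> (\<lambda>_. 0)" "Q u = 0" "u 0 = 0" using N' by blast
    have uz: "\<And>i. i \<ge> n \<Longrightarrow> u i = 0" using u(1) by (simp add: vecs_def)
    show "n \<ge> 4 \<or> (n = 3 \<and> CARD('a) mod 4 = 1)"
    proof (cases "n \<ge> 4")
      case True then show ?thesis by simp
    next
      case False
      then have "n = 2 \<or> n = 3" using n2 by auto
      then show ?thesis
      proof
        assume n: "n = 2"
        have "(u 1)^2 = 0" using u(3,4) n by (simp add: Q_def eval_nat_numeral)
        then have "u 1 = 0" by simp
        then have "u = (\<lambda>_. 0)"
        proof -
          assume u1: "u 1 = 0"
          show ?thesis
          proof
            fix i show "u i = 0"
              using u1 u(4) uz[of i] n by (cases "i = 0 \<or> i = 1") auto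
          qed
        qed
        then show ?thesis using u(2) by simp
      next
        assume n: "n = 3"
        have s: "(u 1)^2 + (u 2)^2 = 0" using u(3,4) n by (simp add: Q_def eval_nat_numeral)
        have "u 2 \<noteq> 0"
        proof
          assume u2: "u 2 = 0"
          then have "u 1 = 0" using s by simp
          then have "u = (\<lambda>_. 0)"
          proof -
            assume u1: "u 1 = 0"
            show ?thesis
            proof
              fix i show "u i = 0"
                using u1 u2 u(4) uz[of i] n by (cases "i = 0 \<or> i = 1 \<or> i = 2") auto
            qed
          qed
          then show False using u(2) by simp
        qed
        then have "(u 1 / u 2)^2 = -1" using s
          by (simp add: power_divide field_simps eq_neg_iff_add_eq_0)
        then have "CARD('a) mod 4 = 1" using minus_one_square[OF q_odd] by blast
        then show ?thesis using n by simp
      qed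
    qed
  next
    assume h: "n \<ge> 4 \<or> (n = 3 \<and> CARD('a) mod 4 = 1)"
    show "0 \<in> Num0' n M"
      unfolding N'
    proof (cases "n \<ge> 4")
      case True
      obtain a b :: 'a where ab: "a^2 + b^2 = - 1" using sum_two_squares[OF q_odd] by blast
      define u where "u = (\<lambda>i::nat. if i = 1 then 1 else if i = 2 then a else if i = 3 then b else (0::'a))"
      have "Q u = (\<Sum>i<4. (u i)^2)" unfolding Q_def
        by (rule sum_trunc) (use True in \<open>auto simp: u_def\<close>)
      also have "\<dots> = 1 + (a^2 + b^2)" by (simp add: eval_nat_numeral u_def)
      also have "\<dots> = 0" using ab by simp
      finally have "Q u = 0" .
      moreover have "u \<in> vecs n" using True by (auto simp: vecs_def u_def)
      moreover have "u \<noteq> (\<lambda>_. 0)" by (auto simp: u_def fun_eq_iff intro!: exI[of _ 1])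
      moreover have "u 0 = 0" by (simp add: u_def)
      ultimately show "\<exists>u\<in>vecs n. u \<noteq> (\<lambda>_. 0) \<and> Q u = 0 \<and> u 0 = 0" by blast
    next
      case False
      then have n: "n = 3" and m4: "CARD('a) mod 4 = 1" using h by auto
      obtain r :: 'a where r: "r^2 = -1" using minus_one_square[OF q_odd] m4 by blast
      define u where "u = (\<lambda>i::nat. if i = 1 then 1 else if i = 2 then r else (0::'a))"
      have "Q u = 1 + r^2" unfolding Q_def u_def using n by (simp add: eval_nat_numeral)
      also have "\<dots> = 0" using r by simp
      finally have "Q u = 0" .
      moreover have "u \<in> vecs n" using n by (auto simp: vecs_def u_def)
      moreover have "u \<noteq> (\<lambda>_. 0)" by (auto simp: u_def fun_eq_iff intro!: exI[of _ 1])
      moreover have "u 0 = 0" by (simp add: u_def)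
      ultimately show "\<exists>u\<in>vecs n. u \<noteq> (\<lambda>_. 0) \<and> Q u = 0 \<and> u 0 = 0" by blast
    qed
  qed
  show ?thesis using part1 part2 part3 by blast
qed

end
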